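(* Let $\mathcal{N}$ be a sound deterministic negotiation, let $\pi$ be a local path of $\mathcal{N}$, and let $n_0$ be the first node of $\pi$. Then $\pi$ is realizable from every reachable configuration that enables $n_0$.
   Context: A negotiation is a tuple $\mathcal{N}=(\mathit{Proc},N,\mathit{dom},R,\delta)$ where $\mathit{Proc}$ is a finite set of processes, $N$ is a finite set of nodes, $\mathit{dom}:N\to 2^{\mathit{Proc}}\setminus\{\emptyset\}$, there are two distinguished nodes $n_{\mathit{init}},n_{\mathit{fin}}$ with $\mathit{dom}(n_{\mathit{init}})=\mathit{dom}(n_{\mathit{fin}})=\mathit{Proc}$, $R$ is a set of results, each node $n$ has a set $\mathit{out}(n)\subseteq R$ of results (nonempty for $n\neq n_{\mathit{fin}}$), and $\delta(n,a,p)\subseteq N$ is defined and nonempty exactly when $a\in\mathit{out}(n)$ and $p\in\mathit{dom}(n)$, with $p\in\mathit{dom}(n')$ for all $n'\in\delta(n,a,p)$. A configuration is a map $C$ assigning to each process a nonempty set of nodes; $C_{\mathit{init}}(p)=\{n_{\mathit{init}}\}$, $C_{\mathit{fin}}(p)=\{n_{\mathit{fin}}\}$. A node $n$ is enabled in $C$ if $n\in C(p)$ for all $p\in\mathit{dom}(n)$. If $n$ is enabled in $C$ and $a\in\mathit{out}(n)$, then $C\xrightarrow{(n,a)}C'$ where $C'(p)=\delta(n,a,p)$ for $p\in\mathit{dom}(n)$ and $C'(p)=C(p)$ otherwise. A run from $C_1$ is a sequence $(n_1,a_1)(n_2,a_2)\cdots$ with $C_1\xrightarrow{(n_1,a_1)}C_2\xrightarrow{(n_2,a_2)}\cdots$;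 a configuration is reachable if some finite run from $C_{\mathit{init}}$ leads to it; a successful run is a finite run from $C_{\mathit{init}}$ to $C_{\mathit{fin}}$. $\mathcal{N}$ is sound if every finite run from $C_{\mathit{init}}$ can be extended to a successful run. The graph of $\mathcal{N}$ has vertex set $N$ and edges $n\xrightarrow{p,a}n'$ whenever $n'\in\delta(n,a,p)$; a local path is a path in this graph. $\mathcal{N}$ is deterministic if every $\delta(n,a,p)$ is a singleton. For a run $v$, $\mathit{dom}(v)$ is the union of $\mathit{dom}(n)$ over all $(n,a)$ occurring in $v$. A local path $n_0\xrightarrow{p_0,a_0}n_1\cdots\xrightarrow{p_{k-1},a_{k-1}}n_k$ is realizable from a configuration $C$ if there is a run $C\xrightarrow{(n_0,a_0)}C_0'\xrightarrow{w_1}C_1\xrightarrow{(n_1,a_1)}C_1'\cdots C_{k-1}\xrightarrow{(n_{k-1},a_{k-1})}C_{k-1}'\xrightarrow{w_k}C_k$ such that $p_i\notin\mathit{dom}(w_{i+1})$ for all $i=0,\dots,k-1$. *)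

theory Defs
  imports Main
begin

(* Processes are the finite type 'p (Proc = UNIV), nodes the finite type 'n (N = UNIV),
   results the type 'r (R = UNIV).  A negotiation is given by
   D (= dom), ni (= n_init), nf (= n_fin), out, and del (= delta);
   undefined values of delta are represented by the empty set. *)

definition negotiation ::
  "('n::finite \<Rightarrow> 'p::finite set) \<Rightarrow> 'n \<Rightarrow> 'n \<Rightarrow> ('n \<Rightarrow> 'r set)
     \<Rightarrow> ('n \<Rightarrow> 'r \<Rightarrow> 'p \<Rightarrow> 'n set) \<Rightarrow> bool" where
  "negotiation D ni nf out del \<longleftrightarrow>
     (\<forall>n. D n \<noteq> {}) \<and> D ni = UNIV \<and> D nf = UNIV \<and>
     (\<forall>n. n \<noteq> nf \<longrightarrow> out n \<noteq> {}) \<and>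
     (\<forall>n a p. del n a p \<noteq> {} \<longleftrightarrow> (a \<in> out n \<and> p \<in> D n)) \<and>
     (\<forall>n a p n'. n' \<in> del n a p \<longrightarrow> p \<in> D n')"

definition deterministic ::
  "('n \<Rightarrow> 'p set) \<Rightarrow> ('n \<Rightarrow> 'r set) \<Rightarrow> ('n \<Rightarrow> 'r \<Rightarrow> 'p \<Rightarrow> 'n set) \<Rightarrow> bool" where
  "deterministic D out del \<longleftrightarrow>
     (\<forall>n a p. a \<in> out n \<and> p \<in> D n \<longrightarrow> (\<exists>n'. del n a p = {n'}))"

definition enabled :: "('n \<Rightarrow> 'p set) \<Rightarrow> ('p \<Rightarrow> 'n set) \<Rightarrow> 'n \<Rightarrow> bool" where
  "enabled D C n \<longleftrightarrow> (\<forall>p\<in>D n. n \<in> C p)"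

definition step ::
  "('n \<Rightarrow> 'p set) \<Rightarrow> ('n \<Rightarrow> 'r set) \<Rightarrow> ('n \<Rightarrow> 'r \<Rightarrow> 'p \<Rightarrow> 'n set)
     \<Rightarrow> ('p \<Rightarrow> 'n set) \<Rightarrow> 'n \<times> 'r \<Rightarrow> ('p \<Rightarrow> 'n set) \<Rightarrow> bool" where
  "step D out del C na C' \<longleftrightarrow>
     enabled D C (fst na) \<and> snd na \<in> out (fst na) \<and>
     C' = (\<lambda>p. if p \<in> D (fst na) then del (fst na) (snd na) p else C p)"

inductive steps ::
  "('n \<Rightarrow> 'p set) \<Rightarrow> ('n \<Rightarrow> 'r set) \<Rightarrow> ('n \<Rightarrow> 'r \<Rightarrow> 'p \<Rightarrow> 'n set)
     \<Rightarrow> ('p \<Rightarrow> 'n set) \<Rightarrow> ('n \<times> 'r) list \<Rightarrow> ('p \<Rightarrow> 'n set) \<Rightarrow> bool"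
  for D out del where
  steps_Nil: "steps D out del C [] C"
| steps_Cons: "step D out del C na C' \<Longrightarrow> steps D out del C' w C''
                 \<Longrightarrow> steps D out del C (na # w) C''"

definition C_init :: "'n \<Rightarrow> ('p \<Rightarrow> 'n set)" where
  "C_init ni = (\<lambda>p. {ni})"

definition C_fin :: "'n \<Rightarrow> ('p \<Rightarrow> 'n set)" where
  "C_fin nf = (\<lambda>p. {nf})"

definition reachable ::
  "('n \<Rightarrow> 'p set) \<Rightarrow> 'n \<Rightarrow> ('n \<Rightarrow> 'r set) \<Rightarrow> ('n \<Rightarrow> 'r \<Rightarrow> 'p \<Rightarrow> 'n set)
     \<Rightarrow> ('p \<Rightarrow> 'n set) \<Rightarrow> bool" where
  "reachable D ni out del C \<longleftrightarrow> (\<exists>w. steps D out del (C_init ni) w C)"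

definition sound ::
  "('n \<Rightarrow> 'p set) \<Rightarrow> 'n \<Rightarrow> 'n \<Rightarrow> ('n \<Rightarrow> 'r set) \<Rightarrow> ('n \<Rightarrow> 'r \<Rightarrow> 'p \<Rightarrow> 'n set) \<Rightarrow> bool" where
  "sound D ni nf out del \<longleftrightarrow>
     (\<forall>w C. steps D out del (C_init ni) w C \<longrightarrow> (\<exists>v. steps D out del C v (C_fin nf)))"

definition run_dom :: "('n \<Rightarrow> 'p set) \<Rightarrow> ('n \<times> 'r) list \<Rightarrow> 'p set" where
  "run_dom D v = (\<Union>x\<in>set v. D (fst x))"

(* A local path n0 -(p0,a0)-> n1 ... -(p_{k-1},a_{k-1})-> nk is represented by its
   first node n0 and the list of labelled edges [(p0,a0,n1), ..., (p_{k-1},a_{k-1},nk)]. *)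
fun local_path ::
  "('n \<Rightarrow> 'r \<Rightarrow> 'p \<Rightarrow> 'n set) \<Rightarrow> 'n \<Rightarrow> ('p \<times> 'r \<times> 'n) list \<Rightarrow> bool" where
  "local_path del n [] = True"
| "local_path del n ((p, a, n') # es) = (n' \<in> del n a p \<and> local_path del n' es)"

fun realizable_from ::
  "('n \<Rightarrow> 'p set) \<Rightarrow> ('n \<Rightarrow> 'r set) \<Rightarrow> ('n \<Rightarrow> 'r \<Rightarrow> 'p \<Rightarrow> 'n set)
     \<Rightarrow> ('p \<Rightarrow> 'n set) \<Rightarrow> 'n \<Rightarrow> ('p \<times> 'r \<times> 'n) list \<Rightarrow> bool" where
  "realizable_from D out del C n [] = True"
| "realizable_from D out del C n ((p, a, n') # es) =
     (\<exists>C0 w C1. step D out del C (n, a) C0 \<and> steps D out del C0 w C1 \<and>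
                 p \<notin> run_dom D w \<and> realizable_from D out del C1 n' es)"

end

theory Submission
  imports Defs
begin

lemma steps_append:
  assumes "steps D out del C u C'" "steps D out del C' v C''"
  shows "steps D out del C (u @ v) C''"
  using assms by (induction rule: steps.induct) (auto intro: steps.intros)

lemma key_first:
  assumes "steps D out del C v C''"
  shows "C p = {n} \<Longrightarrow> C'' = C_fin nf \<Longrightarrow>
    \<exists>w C1. steps D out del C w C1 \<and> p \<notin> run_dom D w \<and> enabled D C1 n"
  using assms
proof (induction arbitrary: rule: steps.induct)
  case (steps_Nil C)
  then have "n = nf" by (auto simp: C_fin_def)
  then have "enabled D C n" using steps_Nil by (auto simp: enabled_def C_fin_def)
  then show ?case by (intro exI[of _ "[]"] exI[of _ C]) (auto simp: run_dom_def intro: steps.intros)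
next
  case (steps_Cons C na C' w C'')
  obtain m a where na: "na = (m, a)" by (cases na)
  show ?case
  proof (cases "p \<in> D m")
    case True
    then have "m \<in> C p" using steps_Cons(1) na by (auto simp: step_def enabled_def)
    then have "m = n" using steps_Cons(4) by auto
    then have "enabled D C n" using steps_Cons(1) na by (auto simp: step_def)
    then show ?thesis by (intro exI[of _ "[]"] exI[of _ C]) (auto simp: run_dom_def intro: steps.intros)
  next
    case False
    then have "C' p = {n}" using steps_Cons(1,4) na by (auto simp: step_def)
    then obtain w1 C1 where w1: "steps D out del C' w1 C1" "p \<notin> run_dom D w1" "enabled D C1 n"
      using steps_Cons(3,5) by blast
    have "steps D out del C (na # w1) C1" using steps_Cons(1) w1(1) by (rule steps.intros)
    moreover have "p \<notin> run_dom D (na # w1)" using w1(2) False na by (auto simp: run_dom_def)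
    ultimately show ?thesis using w1(3) by blast
  qed
qed

theorem lemma3p1:
  fixes D :: "'n::finite \<Rightarrow> 'p::finite set"
    and ni nf :: 'n
    and out :: "'n \<Rightarrow> 'r set"
    and del :: "'n \<Rightarrow> 'r \<Rightarrow> 'p \<Rightarrow> 'n set"
    and n0 :: 'n
    and es :: "('p \<times> 'r \<times> 'n) list"
    and C :: "'p \<Rightarrow> 'n set"
  assumes "negotiation D ni nf out del"
    and "sound D ni nf out del"
    and "deterministic D out del"
    and "local_path del n0 es"
    and "reachable D ni out del C"
    and "enabled D C n0"
  shows "realizable_from D out del C n0 es"
  using assms(4,5,6)
proof (induction es arbitrary: n0 C)
  case Nil
  then show ?case by simp
next
  case (Cons e es)
  obtain p a n' where e: "e = (p, a, n')" by (cases e)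
  have n': "n' \<in> del n0 a p" and lp: "local_path del n' es" using Cons(2) e by auto
  have aout: "a \<in> out n0" and pD: "p \<in> D n0"
    using assms(1) n' unfolding negotiation_def by blast+
  obtain n'' where "del n0 a p = {n''}" using assms(3) aout pD unfolding deterministic_def by blast
  with n' have dsing: "del n0 a p = {n'}" by auto
  define C0 where "C0 = (\<lambda>q. if q \<in> D n0 then del n0 a q else C q)"
  have st: "step D out del C (n0, a) C0" using Cons(4) aout unfolding step_def C0_def by (simp add: fun_eq_iff)
  have C0p: "C0 p = {n'}" using pD dsing by (simp add: C0_def)
  obtain w0 where w0: "steps D out del (C_init ni) w0 C" using Cons(3) unfolding reachable_def by blast
  have r0: "steps D out del (C_init ni) (w0 @ [(n0, a)]) C0"
    using steps_append[OF w0] st by (blast intro: steps.intros)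
  then obtain v where "steps D out del C0 v (C_fin nf)" using assms(2) unfolding sound_def by blast
  from key_first[OF this C0p] obtain w C1 where
    w: "steps D out del C0 w C1" "p \<notin> run_dom D w" "enabled D C1 n'" by blast
  have "reachable D ni out del C1" unfolding reachable_def using steps_append[OF r0 w(1)] by blast
  then have "realizable_from D out del C1 n' es" using Cons.IH lp w(3) by blast
  then show ?case using e st w by auto
qed

end
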